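(* Let $n\ge2$, let $\delta_n=(n-1,n-2,\ldots,2,1)$, and let $\lambda\subseteq\delta_n$ be a partition. Define $\varphi$ on $n\times n$ matrices $M$ by $\varphi(M)_{ij}=M_{ij}+1$ if $j=n-i+2$ (so $2\le i\le n$), and $\varphi(M)_{ij}=M_{ij}$ otherwise. Then $\varphi$ is an integral equivalence from $\mathrm{PASM}(\delta_n/\lambda,n,n)$ onto $\mathrm{ASMCRY}(\lambda,n)$.
   Context: A partition $\mu=(\mu_1\ge\mu_2\ge\cdots)$ is a weakly decreasing sequence of nonnegative integers with finitely many nonzero terms, identified with the set of matrix positions $\{(i,j):i\ge1,1\le j\le\mu_i\}$; $\mu\subseteq\nu$ means $\mu_i\le\nu_i$ for all $i$. For $\mu\subseteq\delta_n$, the $n\times n$ matrix $M^\mu$ has entries $M^\mu_{1,\mu_1+1}=1$; for each $1\le k\le n-1$ with $\mu_k>\mu_{k+1}$, $M^\mu_{k+1,\mu_{k+1}+1}=1$ and $M^\mu_{k+1,\mu_k+1}=-1$; all other entries $0$. $\mathrm{PASM}(\delta_n/\lambda,n,n)$ is the convex hull in $\mathbb{R}^{n^2}$ of $\{M^\mu:\lambda\subseteq\mu\subseteq\delta_n\}$. An $n\times n$ alternating sign matrix is a matrix with entries in $\{-1,0,1\}$ whose partial column sums $\sum_{i'\le i}M_{i'j}$ and partial row sums $\sum_{j'\le j}M_{ij'}$ all lie in $\{0,1\}$ and whose every full row and column sum equals $1$; $\mathrm{ASM}(n)$ is the convex hull of these. $\mathrm{ASMCRY}(\lambda,n)=\{(a_{ij})\in\mathrm{ASM}(n):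 a_{ij}=0 \text{ whenever } i+j\ge n+3 \text{ or } (i,j)\in\lambda\}$. An integral equivalence between integer polytopes $\mathcal{P}\subset\mathbb{R}^d$, $\mathcal{Q}\subset\mathbb{R}^r$ is an affine map $\mathbb{R}^d\to\mathbb{R}^r$ mapping $\mathcal{P}$ bijectively onto $\mathcal{Q}$ and $\mathbb{Z}^d\cap\mathrm{aff}(\mathcal{P})$ bijectively onto $\mathbb{Z}^r\cap\mathrm{aff}(\mathcal{Q})$. *)

theory Defs
  imports "HOL-Analysis.Analysis" "HOL-Library.Function_Algebras"
begin

text \<open>An n x n real matrix is modelled as a function M :: nat => nat => real,
  entry M i j at row i, column j, with 1-based indices; the matrices considered
  vanish outside {1..n} x {1..n}.  We equip functions with the pointwise
  real vector space structure, so that convex hull, affine hull and linearity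
  from HOL-Analysis apply.\<close>

instantiation "fun" :: (type, real_vector) real_vector
begin
definition scaleR_fun_def: "scaleR r f = (\<lambda>x. scaleR r (f x))"
instance
  by standard (auto simp: scaleR_fun_def fun_eq_iff scaleR_add_right scaleR_add_left)
end

type_synonym mat = "nat \<Rightarrow> nat \<Rightarrow> real"

text \<open>A partition is a function mu :: nat => nat, mu i being the i-th part
  (i >= 1); we normalise mu 0 = 0.\<close>

definition is_partition :: "(nat \<Rightarrow> nat) \<Rightarrow> bool" where
  "is_partition mu \<longleftrightarrow> mu 0 = 0 \<and> (\<forall>i\<ge>1. mu (Suc i) \<le> mu i) \<and> finite {i. mu i \<noteq> 0}"

definition part_le :: "(nat \<Rightarrow> nat) \<Rightarrow> (nat \<Rightarrow> nat) \<Rightarrow> bool" where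
  "part_le mu nu \<longleftrightarrow> (\<forall>i\<ge>1. mu i \<le> nu i)"

definition delta :: "nat \<Rightarrow> nat \<Rightarrow> nat" where
  "delta n i = (if i = 0 then 0 else n - i)"

definition cells :: "(nat \<Rightarrow> nat) \<Rightarrow> (nat \<times> nat) set" where
  "cells mu = {(i, j). 1 \<le> i \<and> 1 \<le> j \<and> j \<le> mu i}"

definition Mmu :: "nat \<Rightarrow> (nat \<Rightarrow> nat) \<Rightarrow> mat" where
  "Mmu n mu i j =
     (if i = 1 \<and> j = mu 1 + 1 then 1
      else if 2 \<le> i \<and> i \<le> n \<and> mu (i - 1) > mu i \<and> j = mu i + 1 then 1
      else if 2 \<le> i \<and> i \<le> n \<and> mu (i - 1) > mu i \<and> j = mu (i - 1) + 1 then -1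
      else 0)"

definition PASM :: "nat \<Rightarrow> (nat \<Rightarrow> nat) \<Rightarrow> mat set" where
  "PASM n lam = convex hull
     {Mmu n mu | mu. is_partition mu \<and> part_le lam mu \<and> part_le mu (delta n)}"

definition is_ASM :: "nat \<Rightarrow> mat \<Rightarrow> bool" where
  "is_ASM n A \<longleftrightarrow>
     (\<forall>i j. A i j \<in> {-1, 0, 1}) \<and>
     (\<forall>i j. \<not> (1 \<le> i \<and> i \<le> n \<and> 1 \<le> j \<and> j \<le> n) \<longrightarrow> A i j = 0) \<and>
     (\<forall>i\<in>{1..n}. \<forall>j\<in>{1..n}. (\<Sum>i'=1..i. A i' j) \<in> {0, 1}) \<and>
     (\<forall>i\<in>{1..n}. \<forall>j\<in>{1..n}. (\<Sum>j'=1..j. A i j') \<in> {0, 1}) \<and>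
     (\<forall>i\<in>{1..n}. (\<Sum>j=1..n. A i j) = 1) \<and>
     (\<forall>j\<in>{1..n}. (\<Sum>i=1..n. A i j) = 1)"

definition ASM :: "nat \<Rightarrow> mat set" where
  "ASM n = convex hull {A. is_ASM n A}"

definition ASMCRY :: "(nat \<Rightarrow> nat) \<Rightarrow> nat \<Rightarrow> mat set" where
  "ASMCRY lam n = {a \<in> ASM n. \<forall>i j. (i + j \<ge> n + 3 \<or> (i, j) \<in> cells lam) \<longrightarrow> a i j = 0}"

definition integer_mat :: "mat \<Rightarrow> bool" where
  "integer_mat M \<longleftrightarrow> (\<forall>i j. M i j \<in> \<int>)"

definition affine_map :: "(mat \<Rightarrow> mat) \<Rightarrow> bool" where
  "affine_map f \<longleftrightarrow> (\<exists>g c. linear g \<and> f = (\<lambda>x. g x + c))"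

definition integral_equiv :: "(mat \<Rightarrow> mat) \<Rightarrow> mat set \<Rightarrow> mat set \<Rightarrow> bool" where
  "integral_equiv f P Q \<longleftrightarrow>
     affine_map f \<and> bij_betw f P Q \<and>
     bij_betw f {x \<in> affine hull P. integer_mat x} {y \<in> affine hull Q. integer_mat y}"

definition phi :: "nat \<Rightarrow> mat \<Rightarrow> mat" where
  "phi n M i j = (if 2 \<le> i \<and> i \<le> n \<and> j = n - i + 2 then M i j + 1 else M i j)"

end

theory Submission
  imports Defs
begin


definition cphi :: "nat \<Rightarrow> mat" where
  "cphi n i j = (if 2 \<le> i \<and> i \<le> n \<and> j = n - i + 2 then 1 else 0)"

lemma phi_transl: "phi n = (\<lambda>x. cphi n + x)"
  by (auto simp: fun_eq_iff phi_def cphi_def plus_fun_def)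

lemma sum_mat_apply: "finite S \<Longrightarrow> (\<Sum>v\<in>S. u v *\<^sub>R (v::mat)) i j = (\<Sum>v\<in>S. u v * v i j)"
  by (induction S rule: finite_induct) (auto simp: plus_fun_def scaleR_fun_def zero_fun_def)

definition st :: "nat \<Rightarrow> (nat \<Rightarrow> nat) \<Rightarrow> nat \<Rightarrow> nat \<Rightarrow> real" where
  "st n mu i j = (if i = 0 then 0 else if n + 2 \<le> i + j \<or> j = mu i + 1 then 1 else 0)"

lemma st_pref:
  assumes "1 \<le> i" "i \<le> n" "mu i + i \<le> n"
  shows "(\<Sum>j'=1..j. st n mu i j') = real (j + i - (n+1)) + (if mu i + 1 \<le> j then 1 else 0)"
proof (induction j)
  case 0
  then show ?case using assms by simp
next
  case (Suc j)
  have "(\<Sum>j'=1..Suc j. st n mu i j') = (\<Sum>j'=1..j. st n mu i j') + st n mu i (Suc j)"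
    by simp
  also have "\<dots> = real (Suc j + i - (n+1)) + (if mu i + 1 \<le> Suc j then 1 else 0)"
  proof -
    have "st n mu i (Suc j) = (if n + 2 \<le> i + Suc j \<or> Suc j = mu i + 1 then 1 else 0)"
      using assms by (simp add: st_def)
    then show ?thesis unfolding Suc using assms by (auto simp: of_nat_diff)
  qed
  finally show ?case .
qed

locale goodmu =
  fixes n :: nat and mu :: "nat \<Rightarrow> nat"
  assumes bnd: "\<And>i. 1 \<le> i \<Longrightarrow> i \<le> n \<Longrightarrow> mu i + i \<le> n"
begin

lemma K_gen:
  assumes "1 \<le> i" "i \<le> n" "1 \<le> j" "j \<le> n" "2 \<le> i \<Longrightarrow> mu i \<le> mu (i-1)"
  shows "phi n (Mmu n mu) i j = st n mu i j - st n mu (i-1) j"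
proof (cases "i = 1")
  case True
  then show ?thesis using assms bnd[of 1] by (auto simp: phi_def Mmu_def st_def)
next
  case False
  have b1: "mu i + i \<le> n" "mu (i-1) + (i - 1) \<le> n" using bnd[of i] bnd[of "i-1"] assms False by auto
  show ?thesis using assms b1 False by (auto simp: phi_def Mmu_def st_def)
qed

lemma out0:
  assumes "\<not> (1 \<le> i \<and> i \<le> n \<and> 1 \<le> j \<and> j \<le> n)" "n \<ge> 1"
  shows "phi n (Mmu n mu) i j = 0"
proof -
  have b1: "mu 1 + 1 \<le> n" using bnd[of 1] assms by auto
  have b2: "2 \<le> i \<Longrightarrow> i \<le> n \<Longrightarrow> mu i + i \<le> n \<and> mu (i-1) + (i - 1) \<le> n" using bnd[of i] bnd[of "i-1"] by auto
  show ?thesis using assms b1 b2 by (auto simp: phi_def Mmu_def)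
qed

lemma rowpref:
  assumes "1 \<le> i" "i \<le> n" "j \<le> n"
  shows "(\<Sum>j'=1..j. st n mu i j' - st n mu (i-1) j') =
    (if i = 1 then (if mu 1 + 1 \<le> j then 1 else 0)
     else (if n + 2 \<le> i + j then 1 else 0) + (if mu i + 1 \<le> j then 1 else 0)
          - (if mu (i-1) + 1 \<le> j then 1 else 0))"
proof (cases "i = 1")
  case True
  have "(\<Sum>j'=1..j. st n mu (i-1) j') = 0" using True by (simp add: st_def)
  then show ?thesis using True st_pref[of 1 n mu j] bnd[of 1] assms by (simp add: sum_subtractf)
next
  case False
  have b: "mu i + i \<le> n" "mu (i-1) + (i-1) \<le> n" using bnd[of i] bnd[of "i-1"] assms False by auto
  have "(\<Sum>j'=1..j. st n mu i j' - st n mu (i-1) j') = (\<Sum>j'=1..j. st n mu i j') - (\<Sum>j'=1..j. st n mu (i-1) j')"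
    by (simp add: sum_subtractf)
  also have "\<dots> = real (j + i - (n+1)) + (if mu i + 1 \<le> j then 1 else 0)
      - (real (j + (i-1) - (n+1)) + (if mu (i-1) + 1 \<le> j then 1 else 0))"
    using st_pref[of i n mu j] st_pref[of "i-1" n mu j] b assms False by simp
  also have "\<dots> = (if n + 2 \<le> i + j then 1 else 0) + (if mu i + 1 \<le> j then 1 else 0)
          - (if mu (i-1) + 1 \<le> j then 1 else 0)"
    using False assms by (auto simp: of_nat_diff)
  finally show ?thesis using False by simp
qed

end

locale goodmu2 = goodmu +
  assumes mono_mu: "\<And>i. 2 \<le> i \<Longrightarrow> i \<le> n \<Longrightarrow> mu i \<le> mu (i-1)"
begin

lemma K:
  assumes "1 \<le> i" "i \<le> n" "1 \<le> j" "j \<le> n"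
  shows "phi n (Mmu n mu) i j = st n mu i j - st n mu (i-1) j"
  using K_gen[OF assms] mono_mu assms by auto

lemma colpref:
  assumes "i \<le> n" "1 \<le> j" "j \<le> n"
  shows "(\<Sum>i'=1..i. phi n (Mmu n mu) i' j) = st n mu i j"
  using assms
proof (induction i)
  case 0
  then show ?case by (simp add: st_def)
next
  case (Suc i)
  then show ?case using K[of "Suc i" j] by simp
qed

lemma rowpref2:
  assumes "1 \<le> i" "i \<le> n" "j \<le> n"
  shows "(\<Sum>j'=1..j. phi n (Mmu n mu) i j') \<in> {0,1}"
proof -
  have "(\<Sum>j'=1..j. phi n (Mmu n mu) i j') = (\<Sum>j'=1..j. st n mu i j' - st n mu (i-1) j')"
    using K assms by (intro sum.cong) auto
  also have "\<dots> \<in> {0,1}"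
  proof (cases "i = 1")
    case True
    then show ?thesis using rowpref[OF assms(1,2,3)] by simp
  next
    case False
    have b: "mu i + i \<le> n" "mu (i-1) + (i-1) \<le> n" "mu i \<le> mu (i-1)"
      using bnd[of i] bnd[of "i-1"] mono_mu[of i] assms False by auto
    show ?thesis unfolding rowpref[OF assms(1,2,3)] using False b by auto
  qed
  finally show ?thesis .
qed

lemma rowtot:
  assumes "1 \<le> i" "i \<le> n"
  shows "(\<Sum>j'=1..n. phi n (Mmu n mu) i j') = 1"
proof -
  have "(\<Sum>j'=1..n. phi n (Mmu n mu) i j') = (\<Sum>j'=1..n. st n mu i j' - st n mu (i-1) j')"
    using K assms by (intro sum.cong) auto
  also have "\<dots> = 1"
  proof (cases "i = 1")
    case True
    then show ?thesis using rowpref[OF assms(1,2) order_refl] bnd[of 1] assms by simp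
  next
    case False
    have b: "mu i + i \<le> n" "mu (i-1) + (i-1) \<le> n" "mu i \<le> mu (i-1)"
      using bnd[of i] bnd[of "i-1"] mono_mu[of i] assms False by auto
    show ?thesis unfolding rowpref[OF assms(1,2) order_refl] using False b assms by auto
  qed
  finally show ?thesis .
qed

lemma isASM: assumes "n \<ge> 1" shows "is_ASM n (phi n (Mmu n mu))"
proof -
  have e: "phi n (Mmu n mu) i j \<in> {-1,0,1}" for i j
  proof (cases "1 \<le> i \<and> i \<le> n \<and> 1 \<le> j \<and> j \<le> n")
    case True
    then show ?thesis using K[of i j] by (auto simp: st_def)
  next
    case False
    then show ?thesis using out0 assms by simp
  qed
  have c: "(\<Sum>i'=1..n. phi n (Mmu n mu) i' j) = 1" if "1 \<le> j" "j \<le> n" for j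
    using colpref[of n j] that bnd[of n] assms by (auto simp: st_def)
  show ?thesis unfolding is_ASM_def
    using e out0 assms colpref rowpref2 rowtot c by (auto simp: st_def)
qed

lemma zeros:
  assumes "part_le lam mu" "n \<ge> 1"
  shows "\<forall>i j. (i + j \<ge> n + 3 \<or> (i, j) \<in> cells lam) \<longrightarrow> phi n (Mmu n mu) i j = 0"
proof (intro allI impI)
  fix i j assume h: "i + j \<ge> n + 3 \<or> (i, j) \<in> cells lam"
  show "phi n (Mmu n mu) i j = 0"
  proof (cases "1 \<le> i \<and> i \<le> n \<and> 1 \<le> j \<and> j \<le> n")
    case False
    then show ?thesis using out0 assms by simp
  next
    case True
    have b: "mu i + i \<le> n" using bnd True by auto
    have m: "i \<ge> 2 \<Longrightarrow> mu i \<le> mu (i-1)" using mono_mu True by auto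
    show ?thesis
    proof (cases "i + j \<ge> n + 3")
      case True
      then show ?thesis using K[of i j] \<open>1 \<le> i \<and> i \<le> n \<and> 1 \<le> j \<and> j \<le> n\<close> by (auto simp: st_def)
    next
      case False
      then have "j \<le> lam i" using h by (auto simp: cells_def)
      then have "j \<le> mu i" using assms True by (auto simp: part_le_def)
      have s1: "st n mu i j = 0" using \<open>j \<le> mu i\<close> b True by (auto simp: st_def)
      have s2: "st n mu (i-1) j = 0"
      proof (cases "i = 1")
        case False
        then have "mu i \<le> mu (i-1)" using m True by auto
        then show ?thesis using \<open>j \<le> mu i\<close> b True False by (auto simp: st_def)
      qed (simp add: st_def)
      show ?thesis using K[of i j] True s1 s2 by simp
    qed
  qed
qed

end

lemma sum01_unique:
  fixes f :: "nat \<Rightarrow> real"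
  assumes "finite J" "\<And>j. j \<in> J \<Longrightarrow> f j \<in> {0,1}" "sum f J = 1"
  shows "\<exists>!j. j \<in> J \<and> f j = 1"
proof -
  have "sum f J = sum (\<lambda>j. if f j = 1 then 1 else 0) J"
    using assms(2) by (intro sum.cong) auto
  also have "\<dots> = real (card {j\<in>J. f j = 1})"
    using assms(1) by (simp add: sum.If_cases Int_def conj_commute)
  finally have "card {j\<in>J. f j = 1} = 1" using assms(3) by simp
  then obtain x where "{j\<in>J. f j = 1} = {x}" by (rule card_1_singletonE)
  then show ?thesis by (auto simp: set_eq_iff)
qed

lemma split_sum_nat:
  fixes f :: "nat \<Rightarrow> real"
  assumes "a \<le> b" "b \<le> c"
  shows "(\<Sum>k=a..c. f k) = (\<Sum>k=a..b. f k) + (\<Sum>k=Suc b..c. f k)"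
proof -
  have "{a..c} = {a..b} \<union> {Suc b..c}" using assms by auto
  then show ?thesis by (simp add: sum.union_disjoint)
qed

lemma conv:
  assumes n2: "n \<ge> 2" and lp: "is_partition lam" and ld: "part_le lam (delta n)"
    and A: "is_ASM n A"
    and z: "\<forall>i j. (i + j \<ge> n + 3 \<or> (i, j) \<in> cells lam) \<longrightarrow> A i j = 0"
  shows "\<exists>mu. is_partition mu \<and> part_le lam mu \<and> part_le mu (delta n) \<and> A = phi n (Mmu n mu)"
proof -
  define c where "c i j = (\<Sum>i'=1..i. A i' j)" for i j
  have Aout: "\<not> (1 \<le> i \<and> i \<le> n \<and> 1 \<le> j \<and> j \<le> n) \<Longrightarrow> A i j = 0" for i j
    using A unfolding is_ASM_def by blast
  have c01: "1 \<le> i \<Longrightarrow> i \<le> n \<Longrightarrow> 1 \<le> j \<Longrightarrow> j \<le> n \<Longrightarrow> c i j \<in> {0,1}" for i j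
    using A unfolding is_ASM_def c_def by auto
  have ctot: "1 \<le> j \<Longrightarrow> j \<le> n \<Longrightarrow> c n j = 1" for j
    using A unfolding is_ASM_def c_def by auto
  have rowpre: "1 \<le> i \<Longrightarrow> i \<le> n \<Longrightarrow> 1 \<le> j \<Longrightarrow> j \<le> n \<Longrightarrow> (\<Sum>j'=1..j. A i j') \<in> {0,1}" for i j
    using A unfolding is_ASM_def by auto
  have rowtot: "1 \<le> i \<Longrightarrow> i \<le> n \<Longrightarrow> (\<Sum>j=1..n. A i j) = 1" for i
    using A unfolding is_ASM_def by auto
  have cfull: "c i j = 1" if "1 \<le> i" "i \<le> n" "1 \<le> j" "j \<le> n" "n + 2 \<le> i + j" for i j
  proof -
    have "c n j = c i j + (\<Sum>i'=Suc i..n. A i' j)"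
      unfolding c_def using that by (intro split_sum_nat) auto
    moreover have "(\<Sum>i'=Suc i..n. A i' j) = 0"
      using z that by (intro sum.neutral) auto
    ultimately show ?thesis using ctot that by simp
  qed
  have csum: "(\<Sum>j=1..n. c i j) = real i" if "1 \<le> i" "i \<le> n" for i
  proof -
    have "(\<Sum>j=1..n. c i j) = (\<Sum>i'=1..i. \<Sum>j=1..n. A i' j)"
      unfolding c_def by (rule sum.swap)
    also have "\<dots> = (\<Sum>i'=1..i. 1)" using rowtot that by (intro sum.cong) auto
    finally show ?thesis by simp
  qed
  have cpart: "(\<Sum>j=1..n+1-i. c i j) = 1" if "1 \<le> i" "i \<le> n" for i
  proof -
    have "(\<Sum>j=1..n. c i j) = (\<Sum>j=1..n+1-i. c i j) + (\<Sum>j=Suc (n+1-i)..n. c i j)"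
      using that by (intro split_sum_nat) auto
    moreover have "(\<Sum>j=Suc (n+1-i)..n. c i j) = (\<Sum>j=Suc (n+1-i)..n. 1)"
      using that cfull by (intro sum.cong) auto
    moreover have "(\<Sum>j=Suc (n+1-i)..n. (1::real)) = real i - 1" using that by (simp add: of_nat_diff)
    ultimately show ?thesis using csum[OF that] by simp
  qed
  have ex1: "\<exists>!j. j \<in> {1..n+1-i} \<and> c i j = 1" if "1 \<le> i" "i \<le> n" for i
  proof (rule sum01_unique)
    show "c i j \<in> {0,1}" if "j \<in> {1..n+1-i}" for j
      using c01[of i j] that \<open>1 \<le> i\<close> \<open>i \<le> n\<close> by auto
  qed (use cpart that in auto)
  define mu where "mu i = (if 1 \<le> i \<and> i \<le> n then (THE j. j \<in> {1..n+1-i} \<and> c i j = 1) - 1 else 0)" for i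
  have mu1: "mu i + 1 \<in> {1..n+1-i} \<and> c i (mu i + 1) = 1" if "1 \<le> i" "i \<le> n" for i
  proof -
    have "(THE j. j \<in> {1..n+1-i} \<and> c i j = 1) \<in> {1..n+1-i} \<and> c i (THE j. j \<in> {1..n+1-i} \<and> c i j = 1) = 1"
      using theI'[OF ex1[OF that]] .
    then show ?thesis unfolding mu_def using that by auto
  qed
  have muu: "j = mu i + 1" if "1 \<le> i" "i \<le> n" "j \<in> {1..n+1-i}" "c i j = 1" for i j
    using ex1[OF that(1,2)] mu1[OF that(1,2)] that by blast
  have bnd: "mu i + i \<le> n" if "1 \<le> i" "i \<le> n" for i
    using mu1[OF that] that by auto
  interpret goodmu n mu using bnd by unfold_locales
  have cst: "c i j = st n mu i j" if "i \<le> n" "1 \<le> j" "j \<le> n" for i j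
  proof (cases "i = 0")
    case True
    then show ?thesis by (simp add: c_def st_def)
  next
    case False
    show ?thesis
    proof (cases "n + 2 \<le> i + j")
      case True
      then show ?thesis using cfull[of i j] that False by (simp add: st_def)
    next
      case F2: False
      then have jr: "j \<in> {1..n+1-i}" using that by auto
      show ?thesis
      proof (cases "j = mu i + 1")
        case True
        then show ?thesis using mu1[of i] that False by (simp add: st_def)
      next
        case F3: False
        then have "c i j \<noteq> 1" using muu[of i j] jr that False by auto
        then have "c i j = 0" using c01[of i j] that False by auto
        then show ?thesis using F2 F3 False by (simp add: st_def)
      qed
    qed
  qed
  have Ast: "A i j = st n mu i j - st n mu (i-1) j" if "1 \<le> i" "i \<le> n" "1 \<le> j" "j \<le> n" for i j
  proof -
    have "c i j = c (i-1) j + A i j" unfolding c_def using that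
      by (cases i) auto
    then show ?thesis using cst[of i j] cst[of "i-1" j] that by simp
  qed
  have mono: "mu i \<le> mu (i-1)" if "2 \<le> i" "i \<le> n" for i
  proof (rule ccontr)
    assume "\<not> mu i \<le> mu (i-1)"
    define j0 where "j0 = mu (i-1) + 1"
    have b: "mu i + i \<le> n" using bnd that by auto
    have j0: "1 \<le> j0" "j0 \<le> n" "j0 < mu i + 1" using b that \<open>\<not> mu i \<le> mu (i-1)\<close> by (auto simp: j0_def)
    have "(\<Sum>j'=1..j0. A i j') = (\<Sum>j'=1..j0. st n mu i j' - st n mu (i-1) j')"
      using Ast that j0 by (intro sum.cong) auto
    also have "\<dots> = (if i = 1 then (if mu 1 + 1 \<le> j0 then 1 else 0)
     else (if n + 2 \<le> i + j0 then 1 else 0) + (if mu i + 1 \<le> j0 then 1 else 0)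
          - (if mu (i-1) + 1 \<le> j0 then 1 else 0))"
      using that j0 by (intro rowpref) auto
    also have "\<dots> = -1" using that j0 b by (auto simp: j0_def)
    finally show False using rowpre[of i j0] that j0 by auto
  qed
  interpret goodmu2 n mu using mono by unfold_locales
  have eq: "A = phi n (Mmu n mu)"
  proof (intro ext)
    fix i j
    show "A i j = phi n (Mmu n mu) i j"
    proof (cases "1 \<le> i \<and> i \<le> n \<and> 1 \<le> j \<and> j \<le> n")
      case True
      then show ?thesis using K Ast by simp
    next
      case False
      then show ?thesis using Aout out0 n2 by simp
    qed
  qed
  have lammu: "lam i \<le> mu i" if "1 \<le> i" "i \<le> n" for i
    using that
  proof (induction i)
    case 0 then show ?case by simp
  next
    case (Suc k)
    have b: "mu (Suc k) + Suc k \<le> n" using bnd Suc.prems by blast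
    have step: "lam (Suc k) < mu (Suc k) + 1" if hh: "k = 0 \<or> mu (Suc k) < mu k"
    proof -
      have "st n mu (Suc k) (mu (Suc k) + 1) = 1" by (simp add: st_def)
      moreover have "st n mu k (mu (Suc k) + 1) = 0" using hh b by (auto simp: st_def)
      ultimately have "A (Suc k) (mu (Suc k) + 1) = 1" using Ast[of "Suc k" "mu (Suc k) + 1"] b Suc.prems by simp
      then have "(Suc k, mu (Suc k) + 1) \<notin> cells lam" using z by auto
      then show ?thesis by (auto simp: cells_def)
    qed
    show ?case
    proof (cases "k = 0 \<or> mu (Suc k) < mu k")
      case True
      then show ?thesis using step by auto
    next
      case False
      then have "mu (Suc k) = mu k" "k \<ge> 1" using mono[of "Suc k"] Suc.prems by auto
      moreover have "lam (Suc k) \<le> lam k" using lp \<open>k \<ge> 1\<close> by (auto simp: is_partition_def)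
      ultimately show ?thesis using Suc.IH Suc.prems by auto
    qed
  qed
  have "is_partition mu"
    unfolding is_partition_def
  proof (intro conjI allI impI)
    show "mu 0 = 0" by (simp add: mu_def)
    show "mu (Suc i) \<le> mu i" if "1 \<le> i" for i
      using mono[of "Suc i"] that by (cases "Suc i \<le> n") (auto simp: mu_def)
    have "{i. mu i \<noteq> 0} \<subseteq> {1..n}" by (auto simp: mu_def split: if_splits)
    then show "finite {i. mu i \<noteq> 0}" using finite_subset by blast
  qed
  moreover have "part_le lam mu"
    unfolding part_le_def
  proof (intro allI impI)
    fix i :: nat assume "1 \<le> i"
    show "lam i \<le> mu i"
    proof (cases "i \<le> n")
      case True then show ?thesis using lammu \<open>1 \<le> i\<close> by auto
    next
      case False
      have "lam i \<le> delta n i" using ld \<open>1 \<le> i\<close> unfolding part_le_def by blast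
      then show ?thesis using False by (simp add: delta_def)
    qed
  qed
  moreover have "part_le mu (delta n)"
    unfolding part_le_def delta_def
  proof (intro allI impI)
    fix i :: nat assume "1 \<le> i"
    show "mu i \<le> (if i = 0 then 0 else n - i)"
      using bnd[of i] \<open>1 \<le> i\<close> by (cases "i \<le> n") (auto simp: mu_def)
  qed
  ultimately show ?thesis using eq by blast
qed




lemma face_sum:
  fixes S :: "mat set"
  assumes "finite S" "\<forall>v\<in>S. 0 \<le> u v" "\<forall>v\<in>S. 0 \<le> (\<Sum>j'\<in>J. v i j')"
    "(\<Sum>j'\<in>J. (\<Sum>v\<in>S. u v *\<^sub>R v) i j') = 0" "v \<in> S" "u v \<noteq> 0"
  shows "(\<Sum>j'\<in>J. v i j') = 0"
proof -
  have "(\<Sum>j'\<in>J. (\<Sum>v\<in>S. u v *\<^sub>R v) i j') = (\<Sum>j'\<in>J. \<Sum>v\<in>S. u v * v i j')"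
    using assms(1) by (simp add: sum_mat_apply)
  also have "\<dots> = (\<Sum>v\<in>S. u v * (\<Sum>j'\<in>J. v i j'))"
    by (subst sum.swap) (simp add: sum_distrib_left)
  finally have "(\<Sum>v\<in>S. u v * (\<Sum>j'\<in>J. v i j')) = 0" using assms(4) by simp
  then have "\<forall>v\<in>S. u v * (\<Sum>j'\<in>J. v i j') = 0"
    using assms(1,2,3) by (subst (asm) sum_nonneg_eq_0_iff) auto
  then show ?thesis using assms(5,6) by auto
qed

lemma asm_pre_nonneg:
  assumes "is_ASM n v" "1 \<le> i" "i \<le> n" "j \<le> n"
  shows "0 \<le> (\<Sum>j'=1..j. v i j')"
proof (cases "j = 0")
  case True then show ?thesis by simp
next
  case False
  have "\<forall>i\<in>{1..n}. \<forall>j\<in>{1..n}. (\<Sum>j'=1..j. v i j') \<in> {0, 1}" using assms(1) unfolding is_ASM_def by blast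
  then have "(\<Sum>j'=1..j. v i j') \<in> {0, 1}" using assms False by auto
  then show ?thesis by auto
qed

lemma asm_pre01:
  assumes "is_ASM n v" "1 \<le> i" "i \<le> n" "j \<le> n"
  shows "(\<Sum>j'=1..j. v i j') \<in> {0,1}"
proof (cases "j = 0")
  case True then show ?thesis by simp
next
  case False
  have "\<forall>i\<in>{1..n}. \<forall>j\<in>{1..n}. (\<Sum>j'=1..j. v i j') \<in> {0, 1}" using assms(1) unfolding is_ASM_def by blast
  then show ?thesis using assms False by auto
qed

lemma asm_suf_nonneg:
  assumes "is_ASM n v" "1 \<le> i" "i \<le> n" "2 \<le> k"
  shows "0 \<le> (\<Sum>j'=k..n. v i j')"
proof (cases "k \<le> n")
  case False then show ?thesis by simp
next
  case True
  have "(\<Sum>j'=1..n. v i j') = (\<Sum>j'=1..k-1. v i j') + (\<Sum>j'=Suc (k-1)..n. v i j')"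
    using True assms by (intro split_sum_nat) auto
  moreover have "(\<Sum>j'=1..n. v i j') = 1" using assms(1) assms(2,3) unfolding is_ASM_def by auto
  moreover have "(\<Sum>j'=1..k-1. v i j') \<in> {0,1}" using asm_pre01[OF assms(1,2,3), of "k-1"] True assms by auto
  moreover have "Suc (k-1) = k" using assms by simp
  ultimately show ?thesis by auto
qed

lemma face:
  assumes "a \<in> ASMCRY lam n"
  shows "a \<in> convex hull {A. is_ASM n A \<and> (\<forall>i j. (i + j \<ge> n + 3 \<or> (i, j) \<in> cells lam) \<longrightarrow> A i j = 0)}"
proof -
  have ah: "a \<in> convex hull {A. is_ASM n A}" and za: "\<forall>i j. (i + j \<ge> n + 3 \<or> (i, j) \<in> cells lam) \<longrightarrow> a i j = 0"
    using assms by (auto simp: ASMCRY_def ASM_def)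
  obtain S u where S: "finite S" "S \<subseteq> {A. is_ASM n A}" "\<forall>x\<in>S. 0 \<le> u x" "sum u S = 1"
    "(\<Sum>v\<in>S. u v *\<^sub>R v) = a"
    using ah unfolding convex_hull_explicit by blast
  define S' where "S' = {v\<in>S. u v \<noteq> 0}"
  have zv: "v i j = 0" if v: "v \<in> S'" and ij: "i + j \<ge> n + 3 \<or> (i, j) \<in> cells lam" for v i j
  proof -
    have vS: "v \<in> S" "u v \<noteq> 0" and va: "is_ASM n v" using v S unfolding S'_def by auto
    show ?thesis
    proof (cases "1 \<le> i \<and> i \<le> n \<and> 1 \<le> j \<and> j \<le> n")
      case False
      then show ?thesis using va unfolding is_ASM_def by blast
    next
      case True
      show ?thesis
      proof (cases "(i, j) \<in> cells lam")
        case True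
        have F: "(\<Sum>j'=1..k. v i j') = 0" if "k \<le> j" for k
        proof (rule face_sum[OF S(1,3) _ _ vS])
          show "\<forall>v\<in>S. 0 \<le> (\<Sum>j'=1..k. v i j')"
          proof
            fix w assume "w \<in> S"
            then have "is_ASM n w" using S(2) by blast
            then show "0 \<le> (\<Sum>j'=1..k. w i j')"
              by (rule asm_pre_nonneg) (use \<open>1 \<le> i \<and> i \<le> n \<and> 1 \<le> j \<and> j \<le> n\<close> that in auto)
          qed
          show "(\<Sum>j'=1..k. (\<Sum>v\<in>S. u v *\<^sub>R v) i j') = 0"
            unfolding S(5) using za True that by (intro sum.neutral) (auto simp: cells_def)
        qed
        have "(\<Sum>j'=1..j. v i j') = (\<Sum>j'=1..j-1. v i j') + v i j"
          using \<open>1 \<le> i \<and> i \<le> n \<and> 1 \<le> j \<and> j \<le> n\<close> by (cases j) auto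
        then show ?thesis using F[of j] F[of "j-1"] by simp
      next
        case False
        then have h: "i + j \<ge> n + 3" using ij by auto
        have F: "(\<Sum>j'=k..n. v i j') = 0" if "j \<le> k" for k
        proof (rule face_sum[OF S(1,3) _ _ vS])
          show "\<forall>v\<in>S. 0 \<le> (\<Sum>j'=k..n. v i j')"
          proof
            fix w assume "w \<in> S"
            then have "is_ASM n w" using S(2) by blast
            then show "0 \<le> (\<Sum>j'=k..n. w i j')"
              by (rule asm_suf_nonneg) (use \<open>1 \<le> i \<and> i \<le> n \<and> 1 \<le> j \<and> j \<le> n\<close> that h in auto)
          qed
          show "(\<Sum>j'=k..n. (\<Sum>v\<in>S. u v *\<^sub>R v) i j') = 0"
            unfolding S(5) using za h that by (intro sum.neutral) auto
        qed
        have "(\<Sum>j'=j..n. v i j') = v i j + (\<Sum>j'=Suc j..n. v i j')"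
          using \<open>1 \<le> i \<and> i \<le> n \<and> 1 \<le> j \<and> j \<le> n\<close> by (simp add: sum.atLeast_Suc_atMost)
        then show ?thesis using F[of j] F[of "Suc j"] by simp
      qed
    qed
  qed
  have "a = (\<Sum>v\<in>S'. u v *\<^sub>R v)"
    unfolding S(5)[symmetric] S'_def using S(1) by (intro sum.mono_neutral_right) auto
  moreover have "sum u S' = 1"
  proof -
    have "sum u S = sum u S'" unfolding S'_def using S(1) by (intro sum.mono_neutral_right) auto
    then show ?thesis using S(4) by simp
  qed
  moreover have "S' \<subseteq> {A. is_ASM n A \<and> (\<forall>i j. (i + j \<ge> n + 3 \<or> (i, j) \<in> cells lam) \<longrightarrow> A i j = 0)}"
    using zv S(2) unfolding S'_def by blast
  moreover have "finite S'" "\<forall>x\<in>S'. 0 \<le> u x" using S unfolding S'_def by auto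
  ultimately show ?thesis unfolding convex_hull_explicit by blast
qed



lemma convex_zero: "convex {x::mat. x i j = 0}"
  unfolding convex_def by (simp add: plus_fun_def scaleR_fun_def)

lemma image_Ms:
  assumes n2: "n \<ge> 2" and lp: "is_partition lam" and ld: "part_le lam (delta n)"
  shows "phi n ` {Mmu n mu | mu. is_partition mu \<and> part_le lam mu \<and> part_le mu (delta n)}
    = {A. is_ASM n A \<and> (\<forall>i j. (i + j \<ge> n + 3 \<or> (i, j) \<in> cells lam) \<longrightarrow> A i j = 0)}"
proof (intro equalityI subsetI)
  fix x assume "x \<in> phi n ` {Mmu n mu | mu. is_partition mu \<and> part_le lam mu \<and> part_le mu (delta n)}"
  then obtain mu where mu: "is_partition mu" "part_le lam mu" "part_le mu (delta n)" and x: "x = phi n (Mmu n mu)"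
    by blast
  have bnd: "mu i + i \<le> n" if "1 \<le> i" "i \<le> n" for i
  proof -
    have "mu i \<le> delta n i" using mu(3) that unfolding part_le_def by blast
    then show ?thesis using that by (simp add: delta_def)
  qed
  interpret goodmu n mu using bnd by unfold_locales
  have mono: "mu i \<le> mu (i-1)" if "2 \<le> i" "i \<le> n" for i
  proof -
    have "\<forall>k\<ge>1. mu (Suc k) \<le> mu k" using mu(1) unfolding is_partition_def by blast
    moreover have "1 \<le> i - 1" using that by simp
    ultimately have h: "mu (Suc (i-1)) \<le> mu (i-1)" by blast
    have "Suc (i-1) = i" using that by simp
    then show ?thesis using h by simp
  qed
  interpret goodmu2 n mu using mono by unfold_locales
  show "x \<in> {A. is_ASM n A \<and> (\<forall>i j. (i + j \<ge> n + 3 \<or> (i, j) \<in> cells lam) \<longrightarrow> A i j = 0)}"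
  proof -
    have "is_ASM n (phi n (Mmu n mu))" using isASM n2 by simp
    moreover have "\<forall>i j. (i + j \<ge> n + 3 \<or> (i, j) \<in> cells lam) \<longrightarrow> phi n (Mmu n mu) i j = 0"
      using zeros[OF mu(2)] n2 by simp
    ultimately show ?thesis unfolding x by blast
  qed
next
  fix x assume "x \<in> {A. is_ASM n A \<and> (\<forall>i j. (i + j \<ge> n + 3 \<or> (i, j) \<in> cells lam) \<longrightarrow> A i j = 0)}"
  then have "is_ASM n x" "\<forall>i j. (i + j \<ge> n + 3 \<or> (i, j) \<in> cells lam) \<longrightarrow> x i j = 0" by auto
  from conv[OF n2 lp ld this] obtain mu where "is_partition mu \<and> part_le lam mu \<and> part_le mu (delta n) \<and> x = phi n (Mmu n mu)"
    by blast
  then show "x \<in> phi n ` {Mmu n mu | mu. is_partition mu \<and> part_le lam mu \<and> part_le mu (delta n)}"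
    by blast
qed

lemma ASMCRY_eq:
  "ASMCRY lam n = convex hull {A. is_ASM n A \<and> (\<forall>i j. (i + j \<ge> n + 3 \<or> (i, j) \<in> cells lam) \<longrightarrow> A i j = 0)}"
  (is "_ = convex hull ?G")
proof (intro equalityI subsetI)
  fix a assume "a \<in> ASMCRY lam n" then show "a \<in> convex hull ?G" by (rule face)
next
  fix a assume a: "a \<in> convex hull ?G"
  have "convex hull ?G \<subseteq> ASM n" unfolding ASM_def by (intro hull_mono) blast
  moreover have "a i j = 0" if "i + j \<ge> n + 3 \<or> (i, j) \<in> cells lam" for i j
  proof -
    have "convex hull ?G \<subseteq> {x. x i j = 0}"
      using that by (intro hull_minimal convex_zero) auto
    then show ?thesis using a by auto
  qed
  ultimately show "a \<in> ASMCRY lam n" using a unfolding ASMCRY_def by auto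
qed

lemma int_phi: "integer_mat (phi n x) \<longleftrightarrow> integer_mat x"
proof -
  have "phi n x i j \<in> \<int> \<longleftrightarrow> x i j \<in> \<int>" for i j
  proof (cases "2 \<le> i \<and> i \<le> n \<and> j = n - i + 2")
    case True
    have "x i j + 1 \<in> \<int> \<longleftrightarrow> x i j \<in> \<int>"
      by (metis Ints_1 Ints_add Ints_diff add_diff_cancel_right')
    then show ?thesis using True by (simp add: phi_def)
  qed (simp add: phi_def)
  then show ?thesis unfolding integer_mat_def by auto
qed

theorem mainTheorem8:
  fixes n :: nat and lam :: "nat \<Rightarrow> nat"
  assumes "n \<ge> 2" and "is_partition lam" and "part_le lam (delta n)"
  shows "integral_equiv (phi n) (PASM n lam) (ASMCRY lam n)"
proof -
  let ?M = "{Mmu n mu | mu. is_partition mu \<and> part_le lam mu \<and> part_le mu (delta n)}"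
  have img: "phi n ` PASM n lam = ASMCRY lam n"
    unfolding PASM_def ASMCRY_eq image_Ms[OF assms, symmetric] phi_transl
    by (rule convex_hull_translation[symmetric])
  have inj: "inj (phi n)" unfolding phi_transl by (intro injI) simp
  have aff: "affine_map (phi n)"
    unfolding affine_map_def phi_transl
    by (rule exI[of _ id], rule exI[of _ "cphi n"]) (auto simp: linear_id add.commute)
  have bij1: "bij_betw (phi n) (PASM n lam) (ASMCRY lam n)"
    using img inj by (auto simp: bij_betw_def inj_on_def inj_def)
  have ah: "affine hull (ASMCRY lam n) = phi n ` (affine hull (PASM n lam))"
    unfolding img[symmetric] phi_transl by (rule affine_hull_translation)
  have bij2: "bij_betw (phi n) {x \<in> affine hull PASM n lam. integer_mat x}
      {y \<in> affine hull ASMCRY lam n. integer_mat y}"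
    unfolding bij_betw_def
  proof
    show "inj_on (phi n) {x \<in> affine hull PASM n lam. integer_mat x}"
      using inj by (auto simp: inj_def inj_on_def)
    show "phi n ` {x \<in> affine hull PASM n lam. integer_mat x} = {y \<in> affine hull ASMCRY lam n. integer_mat y}"
      unfolding ah using int_phi by auto
  qed
  show ?thesis unfolding integral_equiv_def using aff bij1 bij2 by blast
qed

end
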